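(* Let $\Omega\subset\mathbb{C}$ be a bounded domain whose boundary consists of $n$ disjoint Jordan curves, let $V_0,\dots,V_{n-1}$ be the connected components of $\hat{\mathbb{C}}\setminus\Omega$ with $\infty\in V_0$, let $\Omega_i=\hat{\mathbb{C}}\setminus V_i$, and let $\phi_i:\overline{D}\to\overline{\Omega_i}$ be Riemann mappings ($i=0,\dots,n-1$). For every $k\in\mathbb{N}$ and $i\in\{0,\dots,n-1\}$, the set $$E^{(i)}_k=\{f\in A(\Omega):\operatorname{Re}(f\circ\phi_i)\restriction_{\mathbb{T}}\in D_k\}$$ is an open subset of $A(\Omega)$.
   Context: $D$ is the open unit disc, $\mathbb{T}=\partial D$. A Riemann mapping $\phi_i:\overline{D}\to\overline{\Omega_i}$ (closure in $\hat{\mathbb{C}}$) is a homeomorphism mapping $D$ conformally onto $\Omega_i$; note $\phi_i(\mathbb{T})=\partial V_i\subset\partial\Omega$. $A(\Omega)$ is the space of functions continuous on $\overline{\Omega}$ and holomorphic on $\Omega$, with the supremum norm on $\overline{\Omega}$. Functions on $\mathbb{T}$ are identified with $2\pi$-periodic functions on $\mathbb{R}$ via $y\mapsto e^{iy}$. For $k\in\mathbb{N}$, $D_k$ is the set of real continuous functions $u$ on $\mathbb{T}$ such that for every $\theta\in\mathbb{R}$ there exists $y\in(\theta,\theta+\frac1k)$ with $|u(y)-u(\theta)|>k|y-\theta|$. *)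

theory Defs
  imports "HOL-Complex_Analysis.Complex_Analysis"
begin

definition A_alg :: "complex set \<Rightarrow> (complex \<Rightarrow> complex) set" where
  "A_alg \<Omega> = {f. continuous_on (closure \<Omega>) f \<and> f holomorphic_on \<Omega>}"

definition sup_dist :: "complex set \<Rightarrow> (complex \<Rightarrow> complex) \<Rightarrow> (complex \<Rightarrow> complex) \<Rightarrow> real" where
  "sup_dist \<Omega> f g = (SUP z\<in>closure \<Omega>. cmod (f z - g z))"

definition open_in_A :: "complex set \<Rightarrow> (complex \<Rightarrow> complex) set \<Rightarrow> bool" where
  "open_in_A \<Omega> E \<longleftrightarrow> E \<subseteq> A_alg \<Omega> \<and>
     (\<forall>f\<in>E. \<exists>\<epsilon>>0. \<forall>g\<in>A_alg \<Omega>. sup_dist \<Omega> f g < \<epsilon> \<longrightarrow> g \<in> E)"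

definition D_set :: "nat \<Rightarrow> (complex \<Rightarrow> real) set" where
  "D_set k = {u. continuous_on (sphere 0 1) u \<and>
     (\<forall>\<theta>::real. \<exists>y. \<theta> < y \<and> y < \<theta> + 1 / real k \<and>
         \<bar>u (cis y) - u (cis \<theta>)\<bar> > real k * \<bar>y - \<theta>\<bar>)}"

text \<open>Riemann mapping of the closed disc onto the closure of a bounded simply
  connected domain U: a homeomorphism (continuous injection of a compact space)
  of the closed disc onto closure U, mapping the open disc conformally onto U.\<close>
definition riemann_map_bdd :: "(complex \<Rightarrow> complex) \<Rightarrow> complex set \<Rightarrow> bool" where
  "riemann_map_bdd \<phi> U \<longleftrightarrow>
     continuous_on (cball 0 1) \<phi> \<and> inj_on \<phi> (cball 0 1) \<and>
     \<phi> ` cball 0 1 = closure U \<and> \<phi> ` ball 0 1 = U \<and> \<phi> holomorphic_on ball 0 1"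

text \<open>Riemann mapping of the closed disc onto the closure (in the Riemann sphere) of
  U \<union> {\<infinity>}, where U \<subseteq> \<complex> is the finite part: the point p of the open disc is
  sent to \<infinity> (expressed by the limit condition), the rest of the closed disc is
  mapped continuously and injectively onto closure U, and the open disc minus p
  conformally onto U.  The value of the function at p is irrelevant.\<close>
definition riemann_map_unbdd :: "(complex \<Rightarrow> complex) \<Rightarrow> complex \<Rightarrow> complex set \<Rightarrow> bool" where
  "riemann_map_unbdd \<phi> p U \<longleftrightarrow> p \<in> ball 0 1 \<and>
     continuous_on (cball 0 1 - {p}) \<phi> \<and> inj_on \<phi> (cball 0 1 - {p}) \<and>
     \<phi> ` (cball 0 1 - {p}) = closure U \<and> \<phi> ` (ball 0 1 - {p}) = U \<and>
     \<phi> holomorphic_on (ball 0 1 - {p}) \<and> filterlim \<phi> at_infinity (at p)"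

end

theory Submission imports Defs begin

lemma D_margin:
  fixes U :: "real \<Rightarrow> real" and k :: real
  assumes cu: "continuous_on UNIV U" and per: "\<And>x j. U (x + 2*pi* of_int j) = U x" and kp: "k > 0"
  and H: "\<forall>\<theta>. \<exists>y. \<theta><y \<and> y<\<theta>+1/k \<and> \<bar>U y - U \<theta>\<bar> > k*\<bar>y-\<theta>\<bar>"
  shows "\<exists>\<delta>>0. \<forall>\<theta>. \<exists>y. \<theta><y \<and> y<\<theta>+1/k \<and> \<bar>U y - U \<theta>\<bar> > k*\<bar>y-\<theta>\<bar> + \<delta>"
proof -
  from H obtain Y where Y: "\<And>\<theta>. \<theta> < Y \<theta> \<and> Y \<theta> < \<theta>+1/k \<and> \<bar>U (Y \<theta>) - U \<theta>\<bar> > k*\<bar>Y \<theta>-\<theta>\<bar>"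
    by metis
  define M where "M \<theta> = \<bar>U (Y \<theta>) - U \<theta>\<bar> - k*(Y \<theta>-\<theta>)" for \<theta>
  have Mp: "M \<theta> > 0" for \<theta> using Y[of \<theta>] by (auto simp: M_def)
  define Ob where "Ob \<theta> = {t. Y \<theta> - 1/k < t} \<inter> {t. t < Y \<theta>} \<inter>
      {t. M \<theta>/2 < \<bar>U (Y \<theta>) - U t\<bar> - k*(Y \<theta>-t)}" for \<theta>
  have opn: "open (Ob \<theta>)" for \<theta>
    unfolding Ob_def
    by (intro open_Int open_Collect_less continuous_intros continuous_on_compose2[OF cu]) auto
  have inO: "\<theta> \<in> Ob \<theta>" for \<theta> using Y[of \<theta>] Mp[of \<theta>] by (auto simp: Ob_def M_def)
  have "compact {0..2*pi}" by simp
  then obtain F where F: "F \<subseteq> {0..2*pi}" "finite F" "{0..2*pi} \<subseteq> (\<Union>c\<in>F. Ob c)"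
    by (rule compactE_image[where f=Ob]) (use opn inO in auto)
  have Fne: "F \<noteq> {}" using F(3) by (auto simp: subset_eq) (meson atLeastAtMost_iff pi_ge_zero zero_le_mult_iff zero_le_numeral order_refl)
  define \<delta> where "\<delta> = Min ((\<lambda>c. M c/2) ` F)"
  have dp: "\<delta> > 0" unfolding \<delta>_def using F(2) Fne Mp by (subst Min_gr_iff) auto
  have dle: "\<delta> \<le> M c/2" if "c \<in> F" for c unfolding \<delta>_def using F(2) that by (intro Min_le) auto
  show ?thesis
  proof (rule exI[of _ "\<delta>"], intro conjI dp allI)
    fix \<theta> :: real
    define j where "j = \<lfloor>\<theta>/(2*pi)\<rfloor>"
    define \<theta>0 where "\<theta>0 = \<theta> - 2*pi* of_int j"
    have "of_int j \<le> \<theta>/(2*pi)" "\<theta>/(2*pi) < of_int j + 1" unfolding j_def by linarith+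
    hence "0 \<le> \<theta>0" "\<theta>0 \<le> 2*pi" unfolding \<theta>0_def by (simp_all add: field_simps)
    with F(3) obtain c where c: "c \<in> F" "\<theta>0 \<in> Ob c" by auto
    define y where "y = Y c + 2*pi* of_int j"
    have th: "\<theta> = \<theta>0 + 2*pi* of_int j" by (simp add: \<theta>0_def)
    have U1: "U y = U (Y c)" unfolding y_def by (rule per)
    have U2: "U \<theta> = U \<theta>0" unfolding th by (rule per)
    have "\<theta> < y \<and> y < \<theta> + 1/k \<and> \<bar>U y - U \<theta>\<bar> > k*\<bar>y-\<theta>\<bar> + \<delta>"
      using c(2) dle[OF c(1)] unfolding Ob_def U1 U2 by (auto simp: y_def th)
    then show "\<exists>y. \<theta><y \<and> y<\<theta>+1/k \<and> \<bar>U y - U \<theta>\<bar> > k*\<bar>y-\<theta>\<bar> + \<delta>" by blast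
  qed
qed

lemma closure_part:
  fixes \<Omega> :: "complex set" and n :: nat
  assumes comp: "components (-\<Omega>) = V ` {..<n}" and i: "i<n" and z: "z \<in> V i" "z \<in> closure (-V i)"
    and op: "open \<Omega>"
  shows "z \<in> closure \<Omega>"
proof -
  define W where "W = \<Union>(V ` ({..<n} \<inter> {j. V j \<noteq> V i}))"
  have cl: "closed (V j)" if "j<n" for j
    by (rule closed_components[of "-\<Omega>"]) (use op comp that in auto)
  have clW: "closed W" unfolding W_def by (intro closed_Union finite_imageI finite_Int[OF disjI1] finite_lessThan) (use cl in auto)
  have sub: "-V i \<subseteq> \<Omega> \<union> W"
  proof
    fix x assume x: "x \<in> -V i"
    show "x \<in> \<Omega> \<union> W"
    proof (cases "x \<in> \<Omega>")
      case False
      then have "x \<in> \<Union>(components (-\<Omega>))" by (simp add: Union_components[symmetric])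
      then obtain j where "j<n" "x \<in> V j" using comp by auto
      then show ?thesis using x unfolding W_def by auto
    qed auto
  qed
  have zW: "z \<notin> W"
  proof
    assume "z \<in> W"
    then obtain j where j: "j<n" "V j \<noteq> V i" "z \<in> V j" unfolding W_def by auto
    have "V j \<inter> V i = {}"
      using components_nonoverlap[of "V j" "-\<Omega>" "V i"] comp j i by auto
    then show False using j z by auto
  qed
  have "z \<in> closure (\<Omega> \<union> W)" using closure_mono[OF sub] z by auto
  then show ?thesis using zW clW by (simp add: closure_Un closure_closed)
qed

theorem lemma4p1:
  fixes \<Omega> :: "complex set" and n :: nat
    and \<gamma> :: "nat \<Rightarrow> real \<Rightarrow> complex"
    and V :: "nat \<Rightarrow> complex set"
    and \<phi> :: "nat \<Rightarrow> complex \<Rightarrow> complex" and p :: "nat \<Rightarrow> complex"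
    and k i :: nat
  assumes dom: "open \<Omega>" "connected \<Omega>" "bounded \<Omega>" "\<Omega> \<noteq> {}"
    and jordan: "\<forall>j<n. simple_path (\<gamma> j) \<and> pathfinish (\<gamma> j) = pathstart (\<gamma> j)"
    and disj: "\<forall>j<n. \<forall>l<n. j \<noteq> l \<longrightarrow> path_image (\<gamma> j) \<inter> path_image (\<gamma> l) = {}"
    and bdry: "frontier \<Omega> = (\<Union>j<n. path_image (\<gamma> j))"
    and comps: "components (- \<Omega>) = V ` {..<n}" "inj_on V {..<n}"
    and V0: "\<not> bounded (V 0)"
    and rm0: "riemann_map_bdd (\<phi> 0) (- V 0)"
    and rmi: "\<forall>j. 1 \<le> j \<and> j < n \<longrightarrow> riemann_map_unbdd (\<phi> j) (p j) (- V j)"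
    and k: "k \<ge> 1" and i: "i < n"
  shows "open_in_A \<Omega> {f \<in> A_alg \<Omega>. (\<lambda>z. Re (f (\<phi> i z))) \<in> D_set k}"
proof -
  have geo: "\<phi> i ` sphere 0 1 \<subseteq> closure \<Omega> \<and> continuous_on (sphere 0 1) (\<phi> i)"
  proof (cases "i = 0")
    case True
    have "\<phi> 0 ` sphere 0 1 \<subseteq> closure \<Omega>"
    proof
      fix z assume "z \<in> \<phi> 0 ` sphere 0 1"
      then obtain w where w: "w \<in> sphere 0 1" "z = \<phi> 0 w" by auto
      have z1: "z \<in> closure (-V 0)" using rm0 w unfolding riemann_map_bdd_def by auto
      have "z \<notin> -V 0"
      proof
        assume "z \<in> -V 0"
        then obtain w' where "w' \<in> ball 0 1" "z = \<phi> 0 w'" using rm0 unfolding riemann_map_bdd_def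
          by (metis imageE)
        then have "w = w'" using rm0 w unfolding riemann_map_bdd_def inj_on_def by auto
        then show False using w \<open>w' \<in> ball 0 1\<close> by auto
      qed
      then show "z \<in> closure \<Omega>" using closure_part[OF comps(1) i, of z] z1 dom(1) True by auto
    qed
    moreover have "continuous_on (sphere 0 1) (\<phi> 0)"
      using rm0 unfolding riemann_map_bdd_def by (meson continuous_on_subset sphere_cball)
    ultimately show ?thesis using True by simp
  next
    case False
    then have r: "riemann_map_unbdd (\<phi> i) (p i) (- V i)" using rmi i by auto
    have sp: "sphere 0 1 \<subseteq> cball 0 1 - {p i}" using r unfolding riemann_map_unbdd_def by auto
    have "\<phi> i ` sphere 0 1 \<subseteq> closure \<Omega>"
    proof
      fix z assume "z \<in> \<phi> i ` sphere 0 1"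
      then obtain w where w: "w \<in> sphere 0 1" "z = \<phi> i w" by auto
      have z1: "z \<in> closure (-V i)" using r w sp unfolding riemann_map_unbdd_def by blast
      have "z \<notin> -V i"
      proof
        assume "z \<in> -V i"
        then obtain w' where "w' \<in> ball 0 1 - {p i}" "z = \<phi> i w'" using r unfolding riemann_map_unbdd_def
          by (metis imageE)
        moreover have "w \<in> cball 0 1 - {p i}" using w sp by auto
        moreover have "w' \<in> cball 0 1 - {p i}" using \<open>w' \<in> ball 0 1 - {p i}\<close> by auto
        ultimately have "w = w'" using r w unfolding riemann_map_unbdd_def by (metis inj_onD)
        then show False using w \<open>w' \<in> ball 0 1 - {p i}\<close> by auto
      qed
      then show "z \<in> closure \<Omega>" using closure_part[OF comps(1) i, of z] z1 dom(1) by auto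
    qed
    moreover have "continuous_on (sphere 0 1) (\<phi> i)"
      using r sp unfolding riemann_map_unbdd_def by (meson continuous_on_subset)
    ultimately show ?thesis by simp
  qed
  have cisS: "cis t \<in> sphere 0 1" for t by simp
  have ccis: "continuous_on UNIV cis"
    by (simp add: cis_conv_exp continuous_intros)
  have cmp: "compact (closure \<Omega>)" using dom(3) by (simp add: compact_closure)
  show ?thesis unfolding open_in_A_def
  proof (intro conjI ballI)
    fix f assume fE: "f \<in> {f \<in> A_alg \<Omega>. (\<lambda>z. Re (f (\<phi> i z))) \<in> D_set k}"
    then have fA: "f \<in> A_alg \<Omega>" and fD: "(\<lambda>z. Re (f (\<phi> i z))) \<in> D_set k" by auto
    define U where "U t = Re (f (\<phi> i (cis t)))" for t
    have cf: "continuous_on (closure \<Omega>) f" using fA by (simp add: A_alg_def)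
    have cU: "continuous_on UNIV U" unfolding U_def
      apply (intro continuous_intros continuous_on_compose2[OF cf] continuous_on_compose2[OF geo[THEN conjunct2]] ccis)
      using geo by auto
    have per: "U (x + 2*pi * of_int j) = U x" for x j
    proof -
      have "cis (x + 2*pi * of_int j) = cis x"
      proof -
        have "cos (2*pi * of_int j) = 1" "sin (2*pi * of_int j) = 0" by (rule cos_int_2pin, rule sin_int_2pin)
        then show ?thesis by (simp add: complex_eq_iff cos_add sin_add)
      qed
      then show ?thesis by (simp add: U_def)
    qed
    have H: "\<forall>\<theta>. \<exists>y. \<theta><y \<and> y<\<theta>+1/real k \<and> \<bar>U y - U \<theta>\<bar> > real k*\<bar>y-\<theta>\<bar>"
      using fD unfolding D_set_def U_def by auto
    obtain \<delta> where dp: "\<delta> > 0" and dH: "\<forall>\<theta>. \<exists>y. \<theta><y \<and> y<\<theta>+1/real k \<and> \<bar>U y - U \<theta>\<bar> > real k*\<bar>y-\<theta>\<bar> + \<delta>"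
      using D_margin[OF cU per _ H] k by auto
    show "\<exists>\<epsilon>>0. \<forall>g\<in>A_alg \<Omega>. sup_dist \<Omega> f g < \<epsilon> \<longrightarrow> g \<in> {f \<in> A_alg \<Omega>. (\<lambda>z. Re (f (\<phi> i z))) \<in> D_set k}"
    proof (intro exI[of _ "\<delta>/2"] conjI ballI impI)
      show "\<delta>/2 > 0" using dp by simp
      fix g assume gA: "g \<in> A_alg \<Omega>" and sd: "sup_dist \<Omega> f g < \<delta>/2"
      have cg: "continuous_on (closure \<Omega>) g" using gA by (simp add: A_alg_def)
      have bd: "cmod (f z - g z) < \<delta>/2" if "z \<in> closure \<Omega>" for z
      proof -
        have "compact ((\<lambda>z. cmod (f z - g z)) ` closure \<Omega>)"
          by (intro compact_continuous_image continuous_intros cf cg cmp)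
        then have "bdd_above ((\<lambda>z. cmod (f z - g z)) ` closure \<Omega>)"
          by (simp add: bounded_imp_bdd_above compact_imp_bounded)
        then have "cmod (f z - g z) \<le> sup_dist \<Omega> f g"
          unfolding sup_dist_def using that by (rule cSUP_upper2) simp
        then show ?thesis using sd by simp
      qed
      have bdU: "\<bar>Re (g (\<phi> i (cis t))) - U t\<bar> < \<delta>/2" for t
      proof -
        have "\<phi> i (cis t) \<in> closure \<Omega>" using geo cisS[of t] by blast
        from bd[OF this] have "\<bar>Re (f (\<phi> i (cis t)) - g (\<phi> i (cis t)))\<bar> < \<delta>/2"
          using abs_Re_le_cmod order.strict_trans1 by blast
        then show ?thesis by (simp add: U_def abs_minus_commute)
      qed
      have "(\<lambda>z. Re (g (\<phi> i z))) \<in> D_set k"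
        unfolding D_set_def
      proof (intro CollectI conjI allI)
        show "continuous_on (sphere 0 1) (\<lambda>z. Re (g (\<phi> i z)))"
          apply (intro continuous_intros continuous_on_compose2[OF cg] geo[THEN conjunct2])
          using geo by auto
        fix \<theta> :: real
        obtain y where y: "\<theta><y" "y<\<theta>+1/real k" "\<bar>U y - U \<theta>\<bar> > real k*\<bar>y-\<theta>\<bar> + \<delta>"
          using dH by blast
        have "\<bar>Re (g (\<phi> i (cis y))) - Re (g (\<phi> i (cis \<theta>)))\<bar> > real k * \<bar>y - \<theta>\<bar>"
          using y(3) bdU[of y] bdU[of \<theta>] by linarith
        then show "\<exists>y. \<theta> < y \<and> y < \<theta> + 1 / real k \<and>
             \<bar>Re (g (\<phi> i (cis y))) - Re (g (\<phi> i (cis \<theta>)))\<bar> > real k * \<bar>y - \<theta>\<bar>"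
          using y by blast
      qed
      then show "g \<in> {f \<in> A_alg \<Omega>. (\<lambda>z. Re (f (\<phi> i z))) \<in> D_set k}" using gA by simp
    qed
  qed auto
qed

end
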